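(* Let $P$ be a positive opetope of dimension $n$ and let $\vec x,\vec x'$ be maximal flags of $P$ such that $\vec x'$ is the immediate $\lhd$-successor of $\vec x$. Then the intersection $\vec x\cap\vec x'$ is a p-flag; if $\mathrm{sgn}(\vec x)=+1$ it is a high p-flag, and if $\mathrm{sgn}(\vec x)=-1$ it is a low p-flag.
   Context: A positive hypergraph $S$ consists of finite sets $S_k$ ($k\in\mathbb{N}$), only finitely many nonempty, functions $\gamma:S_{k+1}\to S_k$, and for each $k$ an assignment $\delta$ sending each $a\in S_{k+1}$ to a nonempty subset $\delta(a)\subseteq S_k$, with $\delta(a)$ a singleton for $a\in S_1$. A face is identified with its singleton; $\gamma(X)=\{\gamma(a):a\in X\}$, $\delta(X)=\bigcup_{a\in X}\delta(a)$. For $k>0$ the lower order $<^-$ on $S_k$ is the transitive closure of: $a\lhd b$ iff $\gamma(a)\in\delta(b)$. The upper order $<^+$ on $S_k$ is the transitive closure of: $a\lhd b$ iff there is $\alpha\in S_{k+1}$ with $a\in\delta(\alpha)$, $\gamma(\alpha)=b$; $a\perp^{\pm}b$ iff $a<^{\pm}b$ or $b<^{\pm}a$. A positive opetopic cardinal: $S_0\ne\emptyset$; globularity ($\gamma\gamma(a)=\gamma\delta(a)-\delta\delta(a)$, $\delta\gamma(a)=\delta\delta(a)-\gamma\delta(a)$ for $\dim a\ge2$); each $<^+$ a strict order, linear on $S_0$; for $k>0$, $\perp^-\cap\perp^+=\emptyset$ on $S_k$; for $x\in S_{k-1}$, $\{a:\gamma(a)=x\}$ and $\{a:x\in\delta(a)\}$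 linearly ordered by $<^+$. A positive opetope: additionally $|P_m-\delta(P_{m+1})|\le1$ for all $m$; if $\dim P=n$ then $P_n=\{\mathbf m_P\}$. Write $\partial(a)=\{\gamma(a)\}\cup\delta(a)$. A maximal flag is a sequence $\vec{x}=[x_n,\dots,x_0]$ with $x_n=\mathbf m_P$, $x_i\in P_i$ and $x_i\in\partial(x_{i+1})$ for $i<n$. The sign of $[x_k,\dots,x_l]$ is $1$ if $k=l$, equals $\mathrm{sgn}([x_{k-1},\dots,x_l])$ if $x_{k-1}=\gamma(x_k)$, and equals $-\mathrm{sgn}([x_{k-1},\dots,x_l])$ if $x_{k-1}\in\delta(x_k)$; $\mathrm{sgn}(\vec x)=\mathrm{sgn}([x_n,\dots,x_0])$. For $x\in P_k$, on $\{a\in P_{k+1}: x\in\partial(a)\}$ define $a\prec_x b$ iff (i) $\gamma(b)=x\in\delta(a)$, or (ii) $x\in\delta(a)\cap\delta(b)$ and $a<^+b$, or (iii) $\gamma(a)=x=\gamma(b)$ and $b<^+a$. For distinct maximal flags $\vec x,\vec y$ with $k=\min\{j:x_j\ne y_j\}$, put $\vec x\lhd\vec y$ iff $k=0$ and $y_0<^+x_0$; or $k>0$, $\mathrm{sgn}([x_{k-1},\dots,x_0])=1$ and $x_k\prec_{x_{k-1}}y_k$; or $k>0$, $\mathrm{sgn}([x_{k-1},\dots,x_0])=-1$ and $y_k\prec_{x_{k-1}}x_k$ (a strict linear order). For a maximal flag $\vec x$ neither $\lhd$-first nor $\lhd$-last, $\mathrm{ll}(\vec x)=\max\{i<n-1: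 x_{i+1}\in\delta(x_{i+2})\}$. For a maximal flag $\vec x$ and a level $i$, $\vec x_{(i)}$ is the sequence obtained from $\vec x$ by replacing $x_i$ by a dummy symbol $0$. A high p-flag is a sequence $\vec x_{(n-1)}$ for some maximal flag $\vec x$; a low p-flag is a sequence $\vec x_{(\mathrm{ll}(\vec x))}$ for some maximal flag $\vec x$ for which $\mathrm{ll}$ is defined; a p-flag is a high or low p-flag. The intersection $\vec x\cap\vec y$ of two maximal flags is the sequence whose entry at level $i$ is $x_i$ if $x_i=y_i$ and $0$ otherwise. *)

theory Defs
  imports Main
begin

text \<open>A positive hypergraph: S k is the (finite) set of k-dimensional faces,
  g is gamma (target), d is delta (source set).  Faces of different dimension
  are distinct elements of the ambient type.\<close>

definition pos_hypergraph :: "(nat \<Rightarrow> 'a set) \<Rightarrow> ('a \<Rightarrow> 'a) \<Rightarrow> ('a \<Rightarrow> 'a set) \<Rightarrow> bool" where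
  "pos_hypergraph S g d \<longleftrightarrow>
     (\<forall>k. finite (S k)) \<and>
     (\<exists>N. \<forall>k\<ge>N. S k = {}) \<and>
     (\<forall>k l. k \<noteq> l \<longrightarrow> S k \<inter> S l = {}) \<and>
     (\<forall>k. \<forall>a\<in>S (Suc k). g a \<in> S k \<and> d a \<noteq> {} \<and> d a \<subseteq> S k) \<and>
     (\<forall>a\<in>S 1. \<exists>x. d a = {x})"

definition bd :: "('a \<Rightarrow> 'a) \<Rightarrow> ('a \<Rightarrow> 'a set) \<Rightarrow> 'a \<Rightarrow> 'a set" where
  "bd g d a = insert (g a) (d a)"

definition lower_rel :: "(nat \<Rightarrow> 'a set) \<Rightarrow> ('a \<Rightarrow> 'a) \<Rightarrow> ('a \<Rightarrow> 'a set) \<Rightarrow> nat \<Rightarrow> ('a \<times> 'a) set" where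
  "lower_rel S g d k = {(a, b). a \<in> S k \<and> b \<in> S k \<and> g a \<in> d b}"

definition upper_rel :: "(nat \<Rightarrow> 'a set) \<Rightarrow> ('a \<Rightarrow> 'a) \<Rightarrow> ('a \<Rightarrow> 'a set) \<Rightarrow> nat \<Rightarrow> ('a \<times> 'a) set" where
  "upper_rel S g d k = {(a, b). a \<in> S k \<and> b \<in> S k \<and> (\<exists>\<alpha>\<in>S (Suc k). a \<in> d \<alpha> \<and> g \<alpha> = b)}"

definition lower_lt :: "(nat \<Rightarrow> 'a set) \<Rightarrow> ('a \<Rightarrow> 'a) \<Rightarrow> ('a \<Rightarrow> 'a set) \<Rightarrow> nat \<Rightarrow> ('a \<times> 'a) set" where
  "lower_lt S g d k = (lower_rel S g d k)\<^sup>+"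

definition upper_lt :: "(nat \<Rightarrow> 'a set) \<Rightarrow> ('a \<Rightarrow> 'a) \<Rightarrow> ('a \<Rightarrow> 'a set) \<Rightarrow> nat \<Rightarrow> ('a \<times> 'a) set" where
  "upper_lt S g d k = (upper_rel S g d k)\<^sup>+"

definition perp :: "('a \<times> 'a) set \<Rightarrow> 'a \<Rightarrow> 'a \<Rightarrow> bool" where
  "perp r a b \<longleftrightarrow> (a, b) \<in> r \<or> (b, a) \<in> r"

definition pos_opetopic_cardinal :: "(nat \<Rightarrow> 'a set) \<Rightarrow> ('a \<Rightarrow> 'a) \<Rightarrow> ('a \<Rightarrow> 'a set) \<Rightarrow> bool" where
  "pos_opetopic_cardinal S g d \<longleftrightarrow>
     pos_hypergraph S g d \<and>
     S 0 \<noteq> {} \<and>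
     (\<forall>k\<ge>2. \<forall>a\<in>S k.
        {g (g a)} = g ` d a - \<Union> (d ` d a) \<and>
        d (g a) = \<Union> (d ` d a) - g ` d a) \<and>
     (\<forall>k. \<forall>a\<in>S k. (a, a) \<notin> upper_lt S g d k) \<and>
     (\<forall>a\<in>S 0. \<forall>b\<in>S 0. a \<noteq> b \<longrightarrow> perp (upper_lt S g d 0) a b) \<and>
     (\<forall>k>0. \<forall>a\<in>S k. \<forall>b\<in>S k.
        \<not> (perp (lower_lt S g d k) a b \<and> perp (upper_lt S g d k) a b)) \<and>
     (\<forall>k. \<forall>x\<in>S k. \<forall>a\<in>S (Suc k). \<forall>b\<in>S (Suc k).
        a \<noteq> b \<longrightarrow>
        ((g a = x \<and> g b = x) \<longrightarrow> perp (upper_lt S g d (Suc k)) a b) \<and>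
        ((x \<in> d a \<and> x \<in> d b) \<longrightarrow> perp (upper_lt S g d (Suc k)) a b))"

definition has_dim :: "(nat \<Rightarrow> 'a set) \<Rightarrow> nat \<Rightarrow> bool" where
  "has_dim S n \<longleftrightarrow> S n \<noteq> {} \<and> (\<forall>k>n. S k = {})"

definition pos_opetope :: "(nat \<Rightarrow> 'a set) \<Rightarrow> ('a \<Rightarrow> 'a) \<Rightarrow> ('a \<Rightarrow> 'a set) \<Rightarrow> bool" where
  "pos_opetope S g d \<longleftrightarrow>
     pos_opetopic_cardinal S g d \<and>
     (\<forall>m. card (S m - \<Union> (d ` S (Suc m))) \<le> 1) \<and>
     (\<forall>n. has_dim S n \<longrightarrow> (\<exists>m. S n = {m}))"

text \<open>Maximal flags are lists of length n+1, indexed by level: x ! i = x_i.\<close>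
definition max_flag :: "(nat \<Rightarrow> 'a set) \<Rightarrow> ('a \<Rightarrow> 'a) \<Rightarrow> ('a \<Rightarrow> 'a set) \<Rightarrow> nat \<Rightarrow> 'a list \<Rightarrow> bool" where
  "max_flag S g d n x \<longleftrightarrow>
     length x = Suc n \<and> x ! n = the_elem (S n) \<and>
     (\<forall>i\<le>n. x ! i \<in> S i) \<and>
     (\<forall>i<n. x ! i \<in> bd g d (x ! Suc i))"

text \<open>sgnto g x k = sgn([x_k, ..., x_0]).\<close>
fun sgnto :: "('a \<Rightarrow> 'a) \<Rightarrow> 'a list \<Rightarrow> nat \<Rightarrow> int" where
  "sgnto g x 0 = 1"
| "sgnto g x (Suc k) = (if x ! k = g (x ! Suc k) then sgnto g x k else - sgnto g x k)"

definition flag_sgn :: "('a \<Rightarrow> 'a) \<Rightarrow> nat \<Rightarrow> 'a list \<Rightarrow> int" where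
  "flag_sgn g n x = sgnto g x n"

text \<open>prec S g d k x a b : a \<prec>_x b, for a, b in S k and x in S (k-1).\<close>
definition prec :: "(nat \<Rightarrow> 'a set) \<Rightarrow> ('a \<Rightarrow> 'a) \<Rightarrow> ('a \<Rightarrow> 'a set) \<Rightarrow> nat \<Rightarrow> 'a \<Rightarrow> 'a \<Rightarrow> 'a \<Rightarrow> bool" where
  "prec S g d k x a b \<longleftrightarrow>
     (g b = x \<and> x \<in> d a) \<or>
     (x \<in> d a \<and> x \<in> d b \<and> (a, b) \<in> upper_lt S g d k) \<or>
     (g a = x \<and> g b = x \<and> (b, a) \<in> upper_lt S g d k)"

definition flag_lt :: "(nat \<Rightarrow> 'a set) \<Rightarrow> ('a \<Rightarrow> 'a) \<Rightarrow> ('a \<Rightarrow> 'a set) \<Rightarrow> 'a list \<Rightarrow> 'a list \<Rightarrow> bool" where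
  "flag_lt S g d x y \<longleftrightarrow> x \<noteq> y \<and>
     (let k = (LEAST j. x ! j \<noteq> y ! j) in
       (k = 0 \<and> (y ! 0, x ! 0) \<in> upper_lt S g d 0) \<or>
       (k > 0 \<and> sgnto g x (k - 1) = 1 \<and> prec S g d k (x ! (k - 1)) (x ! k) (y ! k)) \<or>
       (k > 0 \<and> sgnto g x (k - 1) = -1 \<and> prec S g d k (x ! (k - 1)) (y ! k) (x ! k)))"

definition ll_set :: "('a \<Rightarrow> 'a set) \<Rightarrow> nat \<Rightarrow> 'a list \<Rightarrow> nat set" where
  "ll_set d n x = {i. i < n - 1 \<and> x ! Suc i \<in> d (x ! Suc (Suc i))}"

text \<open>x_(i): replace the entry at level i by the dummy symbol 0 (None).\<close>
definition punct :: "'a list \<Rightarrow> nat \<Rightarrow> 'a option list" where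
  "punct x i = (map Some x)[i := None]"

definition flag_inter :: "'a list \<Rightarrow> 'a list \<Rightarrow> 'a option list" where
  "flag_inter x y = map2 (\<lambda>a b. if a = b then Some a else None) x y"

definition high_pflag :: "(nat \<Rightarrow> 'a set) \<Rightarrow> ('a \<Rightarrow> 'a) \<Rightarrow> ('a \<Rightarrow> 'a set) \<Rightarrow> nat \<Rightarrow> 'a option list \<Rightarrow> bool" where
  "high_pflag S g d n p \<longleftrightarrow> (\<exists>y. max_flag S g d n y \<and> p = punct y (n - 1))"

definition low_pflag :: "(nat \<Rightarrow> 'a set) \<Rightarrow> ('a \<Rightarrow> 'a) \<Rightarrow> ('a \<Rightarrow> 'a set) \<Rightarrow> nat \<Rightarrow> 'a option list \<Rightarrow> bool" where
  "low_pflag S g d n p \<longleftrightarrow> (\<exists>y. max_flag S g d n y \<and>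
     (\<exists>z. max_flag S g d n z \<and> flag_lt S g d z y) \<and>
     (\<exists>z. max_flag S g d n z \<and> flag_lt S g d y z) \<and>
     ll_set d n y \<noteq> {} \<and>
     p = punct y (Max (ll_set d n y)))"

definition pflag :: "(nat \<Rightarrow> 'a set) \<Rightarrow> ('a \<Rightarrow> 'a) \<Rightarrow> ('a \<Rightarrow> 'a set) \<Rightarrow> nat \<Rightarrow> 'a option list \<Rightarrow> bool" where
  "pflag S g d n p \<longleftrightarrow> high_pflag S g d n p \<or> low_pflag S g d n p"

end

theory Submission
  imports Defs
begin


lemma trancl_map:
  assumes "(a,b) \<in> r\<^sup>+" and "\<And>x y. (x,y) \<in> r \<Longrightarrow> (f x, f y) \<in> s"
  shows "(f a, f b) \<in> s\<^sup>+"
  using assms(1) by induction (auto intro: assms(2) trancl_into_trancl)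

locale PO =
  fixes S :: "nat \<Rightarrow> 'a set" and g :: "'a \<Rightarrow> 'a" and d :: "'a \<Rightarrow> 'a set" and n :: nat
  assumes op: "pos_opetope S g d" and dim: "has_dim S n" and n1: "1 \<le> n"
begin

lemma card: "pos_opetopic_cardinal S g d" using op unfolding pos_opetope_def by (elim conjE)
lemmas cp = card[unfolded pos_opetopic_cardinal_def]
lemmas hg = cp[THEN conjunct1]
lemmas hgp = hg[unfolded pos_hypergraph_def]
lemmas A3 = cp[THEN conjunct2, THEN conjunct2, THEN conjunct1]
lemmas A4 = cp[THEN conjunct2, THEN conjunct2, THEN conjunct2, THEN conjunct1]
lemmas A5 = cp[THEN conjunct2, THEN conjunct2, THEN conjunct2, THEN conjunct2, THEN conjunct1]
lemmas A6 = cp[THEN conjunct2, THEN conjunct2, THEN conjunct2, THEN conjunct2, THEN conjunct2, THEN conjunct1]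
lemmas A7 = cp[THEN conjunct2, THEN conjunct2, THEN conjunct2, THEN conjunct2, THEN conjunct2, THEN conjunct2]
lemmas H1 = hgp[THEN conjunct1]
lemmas H3 = hgp[THEN conjunct2, THEN conjunct2, THEN conjunct1]
lemmas H4 = hgp[THEN conjunct2, THEN conjunct2, THEN conjunct2, THEN conjunct1]
lemmas H5 = hgp[THEN conjunct2, THEN conjunct2, THEN conjunct2, THEN conjunct2]

lemma finS: "finite (S k)" using H1 by blast
lemma gS: "a \<in> S (Suc k) \<Longrightarrow> g a \<in> S k" using H4 by blast
lemma dS: "a \<in> S (Suc k) \<Longrightarrow> d a \<subseteq> S k" using H4 by blast
lemma dne: "a \<in> S (Suc k) \<Longrightarrow> d a \<noteq> {}" using H4 by blast
lemma d1: "a \<in> S 1 \<Longrightarrow> \<exists>v. d a = {v}" using H5 by blast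
lemma Sdisj: "k \<noteq> l \<Longrightarrow> S k \<inter> S l = {}" using H3 by blast

lemma glob1: "2 \<le> k \<Longrightarrow> a \<in> S k \<Longrightarrow> {g (g a)} = g ` d a - \<Union> (d ` d a)"
  using A3 by blast
lemma glob2: "2 \<le> k \<Longrightarrow> a \<in> S k \<Longrightarrow> d (g a) = \<Union> (d ` d a) - g ` d a"
  using A3 by blast
lemma up_irr: "a \<in> S k \<Longrightarrow> (a, a) \<notin> upper_lt S g d k"
  using A4 by blast
lemma S0lin: "a \<in> S 0 \<Longrightarrow> b \<in> S 0 \<Longrightarrow> a \<noteq> b \<Longrightarrow> perp (upper_lt S g d 0) a b"
  using A5 by blast
lemma disj: "0 < k \<Longrightarrow> a \<in> S k \<Longrightarrow> b \<in> S k \<Longrightarrow>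
   \<not> (perp (lower_lt S g d k) a b \<and> perp (upper_lt S g d k) a b)"
  using A6 by blast
lemma ax_g: "x \<in> S k \<Longrightarrow> a \<in> S (Suc k) \<Longrightarrow> b \<in> S (Suc k) \<Longrightarrow> a \<noteq> b \<Longrightarrow>
   g a = x \<Longrightarrow> g b = x \<Longrightarrow> perp (upper_lt S g d (Suc k)) a b"
  using A7 by blast
lemma ax_d: "x \<in> S k \<Longrightarrow> a \<in> S (Suc k) \<Longrightarrow> b \<in> S (Suc k) \<Longrightarrow> a \<noteq> b \<Longrightarrow>
   x \<in> d a \<Longrightarrow> x \<in> d b \<Longrightarrow> perp (upper_lt S g d (Suc k)) a b"
  using A7 by blast

lemma Sn: "\<exists>m. S n = {m}" using op dim unfolding pos_opetope_def by (elim conjE) blast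

lemma up_rel_in: "\<alpha> \<in> S (Suc k) \<Longrightarrow> a \<in> d \<alpha> \<Longrightarrow> (a, g \<alpha>) \<in> upper_lt S g d k"
  unfolding upper_lt_def upper_rel_def using dS gS by blast

lemma g_notin_d: "v \<in> S (Suc k) \<Longrightarrow> g v \<notin> d v"
  using up_rel_in up_irr gS by blast

lemma up_trans: "(a,b) \<in> upper_lt S g d k \<Longrightarrow> (b,c) \<in> upper_lt S g d k \<Longrightarrow> (a,c) \<in> upper_lt S g d k"
  unfolding upper_lt_def by (meson trancl_trans)

lemma up_S: "(a,b) \<in> upper_lt S g d k \<Longrightarrow> a \<in> S k \<and> b \<in> S k"
  unfolding upper_lt_def upper_rel_def by (induction rule: trancl.induct) auto

lemma low_irr: "a \<in> S (Suc k) \<Longrightarrow> (a, a) \<notin> lower_lt S g d (Suc k)"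
proof
  assume a: "a \<in> S (Suc k)" and aa: "(a, a) \<in> lower_lt S g d (Suc k)"
  have "(g a, g a) \<in> (upper_rel S g d k)\<^sup>+"
  proof (rule trancl_map[where f=g])
    show "(a,a) \<in> (lower_rel S g d (Suc k))\<^sup>+" using aa unfolding lower_lt_def .
    fix x y assume "(x,y) \<in> lower_rel S g d (Suc k)"
    then show "(g x, g y) \<in> upper_rel S g d k"
      unfolding lower_rel_def upper_rel_def using gS by blast
  qed
  then show False using up_irr[of "g a" k] gS[OF a] unfolding upper_lt_def by blast
qed

end



lemma three_types:
  fixes g :: "'a \<Rightarrow> 'a" and d :: "'a \<Rightarrow> 'a set"
  assumes T: "a = gc \<or> a \<in> D" "b1 = gc \<or> b1 \<in> D" "b2 = gc \<or> b2 \<in> D"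
    "u = g a \<or> u \<in> d a" "u = g b1 \<or> u \<in> d b1" "u = g b2 \<or> u \<in> d b2"
  and S1: "\<And>x y. x \<in> D \<Longrightarrow> y \<in> D \<Longrightarrow> g x = u \<Longrightarrow> g y = u \<Longrightarrow> x = y"
  and S2: "\<And>x y. x \<in> D \<Longrightarrow> y \<in> D \<Longrightarrow> u \<in> d x \<Longrightarrow> u \<in> d y \<Longrightarrow> x = y"
  and S3: "\<And>x. u = g gc \<Longrightarrow> x \<in> D \<Longrightarrow> u \<notin> d x"
  and S4: "\<And>x. u \<in> d gc \<Longrightarrow> x \<in> D \<Longrightarrow> g x \<noteq> u"
  and ne: "a \<noteq> b1" "a \<noteq> b2" "b1 \<noteq> b2"
  shows False
  using T by (elim disjE) (metis S1 S2 S3 S4 ne)+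
context PO begin

lemma up_chain:
  assumes "(b1, b2) \<in> (upper_rel S g d j)\<^sup>+"
  shows "\<exists>\<alpha>1 \<alpha>r. \<alpha>1 \<in> S (Suc j) \<and> \<alpha>r \<in> S (Suc j) \<and> b1 \<in> d \<alpha>1 \<and> g \<alpha>r = b2 \<and>
     (\<alpha>1 = \<alpha>r \<or> (\<alpha>1, \<alpha>r) \<in> lower_lt S g d (Suc j))"
  using assms
proof (induction rule: trancl_induct)
  case (base y)
  then show ?case unfolding upper_rel_def by blast
next
  case (step y z)
  then obtain \<alpha>1 \<alpha>r where h: "\<alpha>1 \<in> S (Suc j)" "\<alpha>r \<in> S (Suc j)" "b1 \<in> d \<alpha>1" "g \<alpha>r = y"
     "\<alpha>1 = \<alpha>r \<or> (\<alpha>1, \<alpha>r) \<in> lower_lt S g d (Suc j)" by blast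
  from step(2) obtain \<beta> where b: "\<beta> \<in> S (Suc j)" "y \<in> d \<beta>" "g \<beta> = z" unfolding upper_rel_def by blast
  have "(\<alpha>r, \<beta>) \<in> lower_rel S g d (Suc j)" using h b unfolding lower_rel_def by blast
  then have "(\<alpha>1, \<beta>) \<in> lower_lt S g d (Suc j)" using h(5) unfolding lower_lt_def
    by (metis r_into_trancl' trancl_into_trancl)
  then show ?case using h b by blast
qed

lemma dc_no_up:
  assumes c: "c \<in> S (Suc j)" and b: "b1 \<in> d c" "b2 \<in> d c" and up: "(b1, b2) \<in> upper_lt S g d j"
  shows False
proof -
  obtain \<alpha>1 \<alpha>r where h: "\<alpha>1 \<in> S (Suc j)" "\<alpha>r \<in> S (Suc j)" "b1 \<in> d \<alpha>1" "g \<alpha>r = b2"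
     "\<alpha>1 = \<alpha>r \<or> (\<alpha>1, \<alpha>r) \<in> lower_lt S g d (Suc j)"
    using up_chain up unfolding upper_lt_def by blast
  have "(\<alpha>r, c) \<in> lower_rel S g d (Suc j)" using h c b unfolding lower_rel_def by blast
  then have l: "(\<alpha>1, c) \<in> lower_lt S g d (Suc j)" using h(5) unfolding lower_lt_def
    by (metis r_into_trancl' trancl_into_trancl)
  show False
  proof (cases "\<alpha>1 = c")
    case True then show ?thesis using l low_irr c by blast
  next
    case False
    have b1S: "b1 \<in> S j" using dS c b by blast
    have "perp (upper_lt S g d (Suc j)) \<alpha>1 c" using ax_d[OF b1S h(1) c False h(3) b(1)] .
    moreover have "perp (lower_lt S g d (Suc j)) \<alpha>1 c" using l unfolding perp_def by blast
    ultimately show False using disj[of "Suc j" \<alpha>1 c] h(1) c by blast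
  qed
qed

lemma N:
  assumes c: "c \<in> S (Suc (Suc j))" and b: "b1 \<in> d c" "b2 \<in> d c" "b1 \<noteq> b2" and u: "u \<in> S j"
    and t: "(g b1 = u \<and> g b2 = u) \<or> (u \<in> d b1 \<and> u \<in> d b2)"
  shows False
proof -
  have bS: "b1 \<in> S (Suc j)" "b2 \<in> S (Suc j)" using dS c b by blast+
  have "perp (upper_lt S g d (Suc j)) b1 b2"
    using t ax_g[OF u bS b(3)] ax_d[OF u bS b(3)] by blast
  then show False unfolding perp_def using dc_no_up[OF c] b by blast
qed

lemma bdS: "c \<in> S (Suc k) \<Longrightarrow> v \<in> bd g d c \<Longrightarrow> v \<in> S k"
  unfolding bd_def using gS dS by blast

lemma partner_unique:
  assumes c: "c \<in> S (Suc (Suc j))" and a: "a \<in> bd g d c" "u \<in> bd g d a"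
    and b1: "b1 \<in> bd g d c" "u \<in> bd g d b1" and b2: "b2 \<in> bd g d c" "u \<in> bd g d b2"
    and ne: "a \<noteq> b1" "a \<noteq> b2"
  shows "b1 = b2"
proof (rule ccontr)
  assume ne2: "b1 \<noteq> b2"
  have G1: "{g (g c)} = g ` d c - \<Union> (d ` d c)" using glob1[of "Suc (Suc j)" c] c by simp
  have G2: "d (g c) = \<Union> (d ` d c) - g ` d c" using glob2[of "Suc (Suc j)" c] c by simp
  have gc: "g c \<notin> d c" using g_notin_d c by blast
  have aS: "a \<in> S (Suc j)" using bdS c a by blast
  have uS: "u \<in> S j" using bdS aS a by blast
  have b1S: "b1 \<in> S (Suc j)" using bdS c b1 by blast
  have b2S: "b2 \<in> S (Suc j)" using bdS c b2 by blast
  have ga: "g a \<notin> d a" "g b1 \<notin> d b1" "g b2 \<notin> d b2" using g_notin_d aS b1S b2S by blast+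
  have S1: "\<And>x y. x \<in> d c \<Longrightarrow> y \<in> d c \<Longrightarrow> g x = u \<Longrightarrow> g y = u \<Longrightarrow> x = y"
    using N[OF c _ _ _ uS] by blast
  have S2: "\<And>x y. x \<in> d c \<Longrightarrow> y \<in> d c \<Longrightarrow> u \<in> d x \<Longrightarrow> u \<in> d y \<Longrightarrow> x = y"
    using N[OF c _ _ _ uS] by blast
  have S3: "\<And>x. u = g (g c) \<Longrightarrow> x \<in> d c \<Longrightarrow> u \<notin> d x" using G1 by blast
  have S4: "\<And>x. u \<in> d (g c) \<Longrightarrow> x \<in> d c \<Longrightarrow> g x \<noteq> u" using G2 by blast
  have T: "a = g c \<or> a \<in> d c" "b1 = g c \<or> b1 \<in> d c" "b2 = g c \<or> b2 \<in> d c"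
    "u = g a \<or> u \<in> d a" "u = g b1 \<or> u \<in> d b1" "u = g b2 \<or> u \<in> d b2"
    using a b1 b2 unfolding bd_def by blast+
  show False by (rule three_types[OF T S1 S2 S3 S4 ne ne2])
qed

lemma loc_facts:
  assumes c: "c \<in> S (Suc (Suc j))" and u: "u \<in> S j"
  shows "\<And>x y. x \<in> d c \<Longrightarrow> y \<in> d c \<Longrightarrow> g x = u \<Longrightarrow> g y = u \<Longrightarrow> x = y"
    and "\<And>x y. x \<in> d c \<Longrightarrow> y \<in> d c \<Longrightarrow> u \<in> d x \<Longrightarrow> u \<in> d y \<Longrightarrow> x = y"
    and "\<And>x. u = g (g c) \<Longrightarrow> x \<in> d c \<Longrightarrow> u \<notin> d x"
    and "\<And>x. u \<in> d (g c) \<Longrightarrow> x \<in> d c \<Longrightarrow> g x \<noteq> u"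
    and "u = g (g c) \<Longrightarrow> \<exists>x\<in>d c. g x = u"
    and "u \<in> d (g c) \<Longrightarrow> \<exists>x\<in>d c. u \<in> d x"
    and "\<And>x. x \<in> d c \<Longrightarrow> u = g x \<Longrightarrow> (\<forall>y\<in>d c. u \<notin> d y) \<Longrightarrow> u = g (g c)"
    and "\<And>x. x \<in> d c \<Longrightarrow> u \<in> d x \<Longrightarrow> (\<forall>y\<in>d c. u \<noteq> g y) \<Longrightarrow> u \<in> d (g c)"
    and "g c \<notin> d c"
    and "\<And>x. x \<in> bd g d c \<Longrightarrow> g x \<notin> d x"
proof -
  have G1: "{g (g c)} = g ` d c - \<Union> (d ` d c)" using glob1[of "Suc (Suc j)" c] c by simp
  have G2: "d (g c) = \<Union> (d ` d c) - g ` d c" using glob2[of "Suc (Suc j)" c] c by simp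
  have KA0: "\<And>w. w \<in> g ` d c - \<Union> (d ` d c) \<longleftrightarrow> w = g (g c)" by (simp only: G1[symmetric]) simp
  have KA: "\<And>w. ((\<exists>x\<in>d c. w = g x) \<and> \<not>(\<exists>x\<in>d c. w \<in> d x)) \<longleftrightarrow> w = g (g c)"
  proof -
    fix w
    have "w \<in> g ` d c - \<Union> (d ` d c) \<longleftrightarrow> ((\<exists>x\<in>d c. w = g x) \<and> \<not>(\<exists>x\<in>d c. w \<in> d x))"
      by (simp add: image_iff)
    then show "((\<exists>x\<in>d c. w = g x) \<and> \<not>(\<exists>x\<in>d c. w \<in> d x)) \<longleftrightarrow> w = g (g c)" using KA0 by simp
  qed
  have KB: "\<And>w. w \<in> d (g c) \<longleftrightarrow> (\<exists>x\<in>d c. w \<in> d x) \<and> \<not> (\<exists>x\<in>d c. w = g x)"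
    by (simp only: G2) (simp add: image_iff)
  show "\<And>x y. x \<in> d c \<Longrightarrow> y \<in> d c \<Longrightarrow> g x = u \<Longrightarrow> g y = u \<Longrightarrow> x = y"
    using N[OF c _ _ _ u] by blast
  show "\<And>x y. x \<in> d c \<Longrightarrow> y \<in> d c \<Longrightarrow> u \<in> d x \<Longrightarrow> u \<in> d y \<Longrightarrow> x = y"
    using N[OF c _ _ _ u] by blast
  show "\<And>x. u = g (g c) \<Longrightarrow> x \<in> d c \<Longrightarrow> u \<notin> d x" using KA by blast
  show "\<And>x. u \<in> d (g c) \<Longrightarrow> x \<in> d c \<Longrightarrow> g x \<noteq> u" using KB by blast
  show "u = g (g c) \<Longrightarrow> \<exists>x\<in>d c. g x = u" using KA by metis
  show "u \<in> d (g c) \<Longrightarrow> \<exists>x\<in>d c. u \<in> d x" using KB by blast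
  show "\<And>x. x \<in> d c \<Longrightarrow> u = g x \<Longrightarrow> (\<forall>y\<in>d c. u \<notin> d y) \<Longrightarrow> u = g (g c)" using KA by blast
  show "\<And>x. x \<in> d c \<Longrightarrow> u \<in> d x \<Longrightarrow> (\<forall>y\<in>d c. u \<noteq> g y) \<Longrightarrow> u \<in> d (g c)" using KB by blast
  show "g c \<notin> d c" using g_notin_d c by blast
  show "\<And>x. x \<in> bd g d c \<Longrightarrow> g x \<notin> d x" using g_notin_d bdS c by blast
qed

lemma partner_ex:
  assumes c: "c \<in> S (Suc (Suc j))" and a: "a \<in> bd g d c" "u \<in> bd g d a"
  shows "\<exists>b. b \<in> bd g d c \<and> b \<noteq> a \<and> u \<in> bd g d b"
proof -
  have aS: "a \<in> S (Suc j)" using bdS c a by blast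
  have uS: "u \<in> S j" using bdS aS a by blast
  note F = loc_facts[OF c uS]
  have T: "a = g c \<or> a \<in> d c" "u = g a \<or> u \<in> d a" using a unfolding bd_def by blast+
  have ga: "g a \<notin> d a" using F(10) a by blast
  show ?thesis
  proof (cases "a = g c")
    case True
    show ?thesis
    proof (cases "u = g a")
      case True2: True
      then obtain x where "x \<in> d c" "g x = u" using F(5) True by blast
      then show ?thesis using F(9) True unfolding bd_def by blast
    next
      case False
      then have "u \<in> d (g c)" using T True by blast
      then obtain x where "x \<in> d c" "u \<in> d x" using F(6) by blast
      then show ?thesis using F(9) True unfolding bd_def by blast
    qed
  next
    case False
    then have ad: "a \<in> d c" using T by blast
    show ?thesis
    proof (cases "u = g a")
      case True
      show ?thesis
      proof (cases "\<exists>y\<in>d c. u \<in> d y")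
        case True2: True
        then obtain y where "y \<in> d c" "u \<in> d y" by blast
        then show ?thesis using True ga unfolding bd_def by blast
      next
        case False
        then have "u = g (g c)" using F(7)[OF ad True] by blast
        then show ?thesis using F(9) ad unfolding bd_def by blast
      qed
    next
      case False
      then have ud: "u \<in> d a" using T by blast
      show ?thesis
      proof (cases "\<exists>y\<in>d c. u = g y")
        case True2: True
        then obtain y where "y \<in> d c" "u = g y" by blast
        then show ?thesis using ud ga unfolding bd_def by blast
      next
        case False
        then have "u \<in> d (g c)" using F(8)[OF ad ud] by blast
        then show ?thesis using F(9) ad unfolding bd_def by blast
      qed
    qed
  qed
qed

definition E :: "'a \<Rightarrow> 'a \<Rightarrow> 'a \<Rightarrow> bool" where
  "E u a c \<longleftrightarrow> (u = g a \<longleftrightarrow> a = g c)"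

lemma local_prec:
  assumes c: "c \<in> S (Suc (Suc j))" and a: "a \<in> bd g d c" "u \<in> bd g d a"
    and b: "b \<in> bd g d c" "u \<in> bd g d b" and ne: "b \<noteq> a"
  shows "(E u a c \<longleftrightarrow> \<not> E u b c) \<and> (E u a c \<longrightarrow> prec S g d (Suc j) u a b)
      \<and> (\<not> E u a c \<longrightarrow> prec S g d (Suc j) u b a)"
proof -
  have aS: "a \<in> S (Suc j)" using bdS c a by blast
  have uS: "u \<in> S j" using bdS aS a by blast
  note F = loc_facts[OF c uS]
  have T: "a = g c \<or> a \<in> d c" "u = g a \<or> u \<in> d a" "b = g c \<or> b \<in> d c" "u = g b \<or> u \<in> d b"
    using a b unfolding bd_def by blast+
  have ga: "g a \<notin> d a" "g b \<notin> d b" using F(10) a b by blast+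
  have up1: "\<And>x. x \<in> d c \<Longrightarrow> (x, g c) \<in> upper_lt S g d (Suc j)" using up_rel_in c by blast
  have gcnd: "g c \<notin> d c" by (rule F(9))
  consider "a = g c" "u = g a" | "a = g c" "u \<in> d a" | "a \<in> d c" "u = g a" | "a \<in> d c" "u \<in> d a"
    using T by blast
  then show ?thesis
  proof cases
    case 1
    then have bd: "b \<in> d c" using T ne by blast
    have "u \<notin> d b" using F(3) 1 bd by blast
    then have ub: "u = g b" using T by blast
    have "b \<noteq> g c" using bd gcnd by blast
    then show ?thesis using 1 ub bd up1[OF bd] unfolding E_def prec_def by auto
  next
    case 2
    then have bd: "b \<in> d c" using T ne by blast
    have "u \<noteq> g b" using F(4) 2 bd by blast
    then have ub: "u \<in> d b" using T by blast
    have "b \<noteq> g c" using bd gcnd by blast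
    then show ?thesis using 2 ub bd up1[OF bd] ga unfolding E_def prec_def by auto
  next
    case 3
    have ane: "a \<noteq> g c" using 3 gcnd by blast
    show ?thesis
    proof (cases "b = g c")
      case True
      then have "u = g b" using F(4)[of a] 3 T True by blast
      then show ?thesis using 3 True ane up1[OF 3(1)] ga unfolding E_def prec_def by auto
    next
      case False
      then have bd: "b \<in> d c" using T by blast
      have "u \<noteq> g b" using F(1)[OF 3(1) bd] 3 ne by auto
      then have "u \<in> d b" using T by blast
      then show ?thesis using 3 False ane \<open>u \<noteq> g b\<close> unfolding E_def prec_def by auto
    qed
  next
    case 4
    have ane: "a \<noteq> g c" using 4 gcnd by blast
    have uga: "u \<noteq> g a" using 4 ga by blast
    show ?thesis
    proof (cases "b = g c")
      case True
      then have "u \<noteq> g b" using F(3)[of a] 4 T True by blast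
      then have "u \<in> d b" using T by blast
      then show ?thesis using 4 True ane uga up1[OF 4(1)] \<open>u \<noteq> g b\<close> unfolding E_def prec_def by auto
    next
      case False
      then have bd: "b \<in> d c" using T by blast
      have "u \<notin> d b" using F(2)[OF 4(1) bd] 4 ne by auto
      then have "u = g b" using T by blast
      then show ?thesis using 4 False ane uga \<open>u \<notin> d b\<close> unfolding E_def prec_def by auto
    qed
  qed
qed

lemma local0:
  assumes c: "c \<in> S 1" and a: "a \<in> bd g d c" and b: "b \<in> bd g d c" and ne: "b \<noteq> a"
  shows "(a = g c \<longleftrightarrow> b \<noteq> g c) \<and> (a = g c \<longrightarrow> (b, a) \<in> upper_lt S g d 0)
     \<and> (a \<noteq> g c \<longrightarrow> (a, b) \<in> upper_lt S g d 0)"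
proof -
  obtain v where v: "d c = {v}" using d1 c by blast
  have "g c \<notin> d c" using g_notin_d c by simp
  moreover have "(v, g c) \<in> upper_lt S g d 0" using up_rel_in[of c 0 v] c v by simp
  ultimately show ?thesis using a b ne v unfolding bd_def by auto
qed

lemma partner0:
  assumes c: "c \<in> S 1" and a: "a \<in> bd g d c"
  shows "\<exists>b. b \<in> bd g d c \<and> b \<noteq> a"
    and "\<And>b1 b2. b1 \<in> bd g d c \<Longrightarrow> b2 \<in> bd g d c \<Longrightarrow> b1 \<noteq> a \<Longrightarrow> b2 \<noteq> a \<Longrightarrow> b1 = b2"
proof -
  obtain v where v: "d c = {v}" using d1 c by blast
  have "g c \<notin> d c" using g_notin_d c by simp
  then show "\<exists>b. b \<in> bd g d c \<and> b \<noteq> a" using a v unfolding bd_def by auto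
  show "\<And>b1 b2. b1 \<in> bd g d c \<Longrightarrow> b2 \<in> bd g d c \<Longrightarrow> b1 \<noteq> a \<Longrightarrow> b2 \<noteq> a \<Longrightarrow> b1 = b2"
    using a v unfolding bd_def by auto
qed

end



lemma sgnto_pm: "sgnto g y k = 1 \<or> sgnto g y k = -1"
  by (induction k) auto

lemma sgnto_prefix: "(\<And>i. i \<le> k \<Longrightarrow> x ! i = y ! i) \<Longrightarrow> sgnto g x k = sgnto g y k"
  by (induction k) auto

lemma prec_trans_gen:
  assumes tr: "\<And>a b c. (a,b) \<in> U \<Longrightarrow> (b,c) \<in> U \<Longrightarrow> (a,c) \<in> U" and nb: "g b \<notin> d b"
  and h1: "(g b = u \<and> u \<in> d a) \<or> (u \<in> d a \<and> u \<in> d b \<and> (a, b) \<in> U) \<or> (g a = u \<and> g b = u \<and> (b, a) \<in> U)"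
  and h2: "(g c = u \<and> u \<in> d b) \<or> (u \<in> d b \<and> u \<in> d c \<and> (b, c) \<in> U) \<or> (g b = u \<and> g c = u \<and> (c, b) \<in> U)"
  shows "(g c = u \<and> u \<in> d a) \<or> (u \<in> d a \<and> u \<in> d c \<and> (a, c) \<in> U) \<or> (g a = u \<and> g c = u \<and> (c, a) \<in> U)"
proof -
  have t1: "(a,b) \<in> U \<Longrightarrow> (b,c) \<in> U \<Longrightarrow> (a,c) \<in> U" "(c,b) \<in> U \<Longrightarrow> (b,a) \<in> U \<Longrightarrow> (c,a) \<in> U"
    using tr by blast+
  show ?thesis using h1 h2 nb t1 by (elim disjE conjE) auto
qed

lemma prec_total_gen:
  assumes "g a \<notin> d a" "g b \<notin> d b"
   "g a = u \<Longrightarrow> g b = u \<Longrightarrow> (a,b) \<in> U \<or> (b,a) \<in> U"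
   "u \<in> d a \<Longrightarrow> u \<in> d b \<Longrightarrow> (a,b) \<in> U \<or> (b,a) \<in> U"
   "u = g a \<or> u \<in> d a" "u = g b \<or> u \<in> d b"
  shows "((g b = u \<and> u \<in> d a) \<or> (u \<in> d a \<and> u \<in> d b \<and> (a, b) \<in> U) \<or> (g a = u \<and> g b = u \<and> (b, a) \<in> U)) \<or>
    ((g a = u \<and> u \<in> d b) \<or> (u \<in> d b \<and> u \<in> d a \<and> (b, a) \<in> U) \<or> (g b = u \<and> g a = u \<and> (a, b) \<in> U))"
proof -
  consider "g a = u" "g b = u" | "g a = u" "u \<in> d b" | "u \<in> d a" "g b = u" | "u \<in> d a" "u \<in> d b"
    using assms(5,6) by metis
  then show ?thesis
  proof cases
    case 1 then show ?thesis using assms(3) by blast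
  next
    case 2 then show ?thesis by blast
  next
    case 3 then show ?thesis by blast
  next
    case 4 then show ?thesis using assms(4) by blast
  qed
qed

definition fc :: "(nat \<Rightarrow> 'a set) \<Rightarrow> ('a \<Rightarrow> 'a) \<Rightarrow> ('a \<Rightarrow> 'a set) \<Rightarrow> 'a list \<Rightarrow> 'a list \<Rightarrow> nat \<Rightarrow> bool" where
  "fc S g d x y k \<longleftrightarrow>
       (k = 0 \<and> (y ! 0, x ! 0) \<in> upper_lt S g d 0) \<or>
       (k > 0 \<and> sgnto g x (k - 1) = 1 \<and> prec S g d k (x ! (k - 1)) (x ! k) (y ! k)) \<or>
       (k > 0 \<and> sgnto g x (k - 1) = -1 \<and> prec S g d k (x ! (k - 1)) (y ! k) (x ! k))"

lemma flag_lt_char: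
  assumes "length x = length y" "k < length x" "\<And>i. i < k \<Longrightarrow> x ! i = y ! i" "x ! k \<noteq> y ! k"
  shows "flag_lt S g d x y \<longleftrightarrow> fc S g d x y k"
proof -
  have L: "(LEAST j. x ! j \<noteq> y ! j) = k"
    by (rule Least_equality) (use assms(3,4) in \<open>auto simp: not_less[symmetric]\<close>)
  have "x \<noteq> y" using assms(4) by blast
  then show ?thesis unfolding flag_lt_def Let_def L fc_def by simp
qed

lemma first_diff:
  assumes "length x = length y" "x \<noteq> y"
  shows "\<exists>k < length x. (\<forall>i<k. x ! i = y ! i) \<and> x ! k \<noteq> y ! k"
proof -
  have ex: "\<exists>j. j < length x \<and> x ! j \<noteq> y ! j" using assms nth_equalityI by blast
  define k where "k = (LEAST j. j < length x \<and> x ! j \<noteq> y ! j)"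
  have k: "k < length x \<and> x ! k \<noteq> y ! k" unfolding k_def using LeastI_ex[OF ex] .
  have "\<forall>i<k. x ! i = y ! i"
  proof (intro allI impI)
    fix i assume "i < k"
    then show "x ! i = y ! i" using not_less_Least[of i "\<lambda>j. j < length x \<and> x ! j \<noteq> y ! j"] k
      unfolding k_def by auto
  qed
  then show ?thesis using k by blast
qed

context PO begin

definition flag where "flag y \<longleftrightarrow> max_flag S g d n y"

lemma flagD:
  assumes "flag y"
  shows "length y = Suc n" "\<And>i. i \<le> n \<Longrightarrow> y ! i \<in> S i" "\<And>i. i < n \<Longrightarrow> y ! i \<in> bd g d (y ! Suc i)"
    "y ! n = the_elem (S n)"
  using assms unfolding flag_def max_flag_def by auto

lemma prec_irr: "a \<in> S (Suc j) \<Longrightarrow> \<not> prec S g d (Suc j) u a a"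
  unfolding prec_def using g_notin_d up_irr by blast

lemma prec_trans:
  assumes "b \<in> S (Suc j)" "prec S g d (Suc j) u a b" "prec S g d (Suc j) u b c"
  shows "prec S g d (Suc j) u a c"
proof -
  have "g b \<notin> d b" using g_notin_d assms(1) by blast
  from prec_trans_gen[where U="upper_lt S g d (Suc j)", OF up_trans this assms(2)[unfolded prec_def] assms(3)[unfolded prec_def]]
  show ?thesis unfolding prec_def .
qed

lemma prec_total:
  assumes "a \<in> S (Suc j)" "b \<in> S (Suc j)" "a \<noteq> b" "u \<in> S j" "u \<in> bd g d a" "u \<in> bd g d b"
  shows "prec S g d (Suc j) u a b \<or> prec S g d (Suc j) u b a"
proof -
  have n1: "g a \<notin> d a" "g b \<notin> d b" using g_notin_d assms(1,2) by blast+
  have p1: "g a = u \<Longrightarrow> g b = u \<Longrightarrow> perp (upper_lt S g d (Suc j)) a b" using ax_g[OF assms(4,1,2,3)] by blast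
  have p2: "u \<in> d a \<Longrightarrow> u \<in> d b \<Longrightarrow> perp (upper_lt S g d (Suc j)) a b" using ax_d[OF assms(4,1,2,3)] by blast
  have t: "u = g a \<or> u \<in> d a" "u = g b \<or> u \<in> d b" using assms(5,6) unfolding bd_def by auto
  show ?thesis unfolding prec_def by (rule prec_total_gen[OF n1 p1[unfolded perp_def] p2[unfolded perp_def] t])
qed

lemma fc_trans:
  assumes x: "flag x" and y: "flag y" and z: "flag z" and k: "k \<le> n"
    and agxy: "\<And>i. i < k \<Longrightarrow> x ! i = y ! i" and agyz: "\<And>i. i < k \<Longrightarrow> y ! i = z ! i"
    and h1: "fc S g d x y k" and h2: "fc S g d y z k"
  shows "fc S g d x z k"
proof (cases k)
  case 0
  then show ?thesis using h1 h2 up_trans unfolding fc_def by auto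
next
  case (Suc j)
  have s: "sgnto g x j = sgnto g y j" using agxy Suc by (intro sgnto_prefix) auto
  have u: "x ! j = y ! j" using agxy Suc by simp
  have yS: "y ! Suc j \<in> S (Suc j)" using flagD(2)[OF y] k Suc by simp
  have h1': "(sgnto g x j = 1 \<and> prec S g d (Suc j) (x ! j) (x ! Suc j) (y ! Suc j)) \<or>
      (sgnto g x j = -1 \<and> prec S g d (Suc j) (x ! j) (y ! Suc j) (x ! Suc j))"
    using h1 unfolding fc_def Suc by simp
  have h2': "(sgnto g x j = 1 \<and> prec S g d (Suc j) (x ! j) (y ! Suc j) (z ! Suc j)) \<or>
      (sgnto g x j = -1 \<and> prec S g d (Suc j) (x ! j) (z ! Suc j) (y ! Suc j))"
    using h2 s u unfolding fc_def Suc by simp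
  have "(sgnto g x j = 1 \<and> prec S g d (Suc j) (x ! j) (x ! Suc j) (z ! Suc j)) \<or>
      (sgnto g x j = -1 \<and> prec S g d (Suc j) (x ! j) (z ! Suc j) (x ! Suc j))"
  proof (cases "sgnto g x j = 1")
    case True
    then show ?thesis using h1' h2' prec_trans[OF yS] by fastforce
  next
    case False
    then have "sgnto g x j = -1" using sgnto_pm[of g x j] by simp
    then show ?thesis using h1' h2' prec_trans[OF yS] by fastforce
  qed
  then show ?thesis unfolding fc_def Suc by simp
qed

lemma fc_irr:
  assumes x: "flag x" and k: "k \<le> n" and e: "x ! k = y ! k"
  shows "\<not> fc S g d x y k"
proof (cases k)
  case 0
  then show ?thesis using up_irr e flagD(2)[OF x, of 0] unfolding fc_def by auto
next
  case (Suc j)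
  have "x ! Suc j \<in> S (Suc j)" using flagD(2)[OF x] k Suc by simp
  then show ?thesis using prec_irr e unfolding fc_def Suc by auto
qed

lemma lt_trans:
  assumes x: "flag x" and y: "flag y" and z: "flag z"
    and h1: "flag_lt S g d x y" and h2: "flag_lt S g d y z"
  shows "flag_lt S g d x z"
proof -
  have len: "length x = Suc n" "length y = Suc n" "length z = Suc n" using flagD x y z by auto
  have "x \<noteq> y" "y \<noteq> z" using h1 h2 unfolding flag_lt_def by auto
  then obtain k1 k2 where k1: "k1 < Suc n" "\<forall>i<k1. x ! i = y ! i" "x ! k1 \<noteq> y ! k1"
    and k2: "k2 < Suc n" "\<forall>i<k2. y ! i = z ! i" "y ! k2 \<noteq> z ! k2"
    using first_diff len by metis
  have f1: "fc S g d x y k1" using h1 flag_lt_char[of x y k1] k1 len by simp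
  have f2: "fc S g d y z k2" using h2 flag_lt_char[of y z k2] k2 len by simp
  consider "k1 < k2" | "k2 < k1" | "k1 = k2" by arith
  then show ?thesis
  proof cases
    case 1
    have "fc S g d x z k1" using f1 k2 1 unfolding fc_def by auto
    then show ?thesis using flag_lt_char[of x z k1] k1 k2 1 len by auto
  next
    case 2
    have s: "k2 > 0 \<Longrightarrow> sgnto g x (k2 - 1) = sgnto g y (k2 - 1)" using k1 2 by (intro sgnto_prefix) auto
    have "fc S g d x z k2" using f2 k1 2 s unfolding fc_def by auto
    then show ?thesis using flag_lt_char[of x z k2] k1 k2 2 len by auto
  next
    case 3
    show ?thesis
    proof (cases "x ! k1 = z ! k1")
      case True
      have "fc S g d x z k1" using fc_trans[OF x y z _ _ _ f1] f2 k1 k2 3 by auto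
      then show ?thesis using fc_irr[OF x, of k1 z] True k1 by auto
    next
      case False
      have "fc S g d x z k1" using fc_trans[OF x y z _ _ _ f1] f2 k1 k2 3 by auto
      then show ?thesis using flag_lt_char[of x z k1] k1 k2 3 len False by auto
    qed
  qed
qed

lemma lt_total:
  assumes x: "flag x" and y: "flag y" and ne: "x \<noteq> y"
  shows "flag_lt S g d x y \<or> flag_lt S g d y x"
proof -
  have len: "length x = Suc n" "length y = Suc n" using flagD x y by auto
  obtain k where k: "k < Suc n" "\<forall>i<k. x ! i = y ! i" "x ! k \<noteq> y ! k"
    using first_diff len ne by metis
  have "fc S g d x y k \<or> fc S g d y x k"
  proof (cases k)
    case 0
    then show ?thesis using S0lin[of "x ! 0" "y ! 0"] flagD(2)[OF x, of 0] flagD(2)[OF y, of 0] k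
      unfolding fc_def perp_def by auto
  next
    case (Suc j)
    have s: "sgnto g x j = sgnto g y j" using k Suc by (intro sgnto_prefix) auto
    have u: "x ! j = y ! j" using k Suc by simp
    have xS: "x ! Suc j \<in> S (Suc j)" "y ! Suc j \<in> S (Suc j)" using flagD(2)[OF x, of "Suc j"] flagD(2)[OF y, of "Suc j"] k Suc by auto
    have uS: "x ! j \<in> S j" using flagD(2)[OF x, of j] k Suc by simp
    have b: "x ! j \<in> bd g d (x ! Suc j)" "x ! j \<in> bd g d (y ! Suc j)"
      using flagD(3)[OF x, of j] flagD(3)[OF y, of j] u k Suc by auto
    have "prec S g d (Suc j) (x ! j) (x ! Suc j) (y ! Suc j) \<or> prec S g d (Suc j) (x ! j) (y ! Suc j) (x ! Suc j)"
      using prec_total[OF xS _ uS b] k Suc by auto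
    then show ?thesis using s u sgnto_pm[of g x j] unfolding fc_def Suc by auto
  qed
  then show ?thesis using flag_lt_char[of x y k] flag_lt_char[of y x k] k len by auto
qed

lemma lt_irr: "\<not> flag_lt S g d x x" unfolding flag_lt_def by simp

lemma lt_asym: "flag x \<Longrightarrow> flag y \<Longrightarrow> flag_lt S g d x y \<Longrightarrow> \<not> flag_lt S g d y x"
  using lt_trans[of x y x] lt_irr[of x] by blast

lemma fin_flags: "finite {y. flag y}"
proof -
  have "{y. flag y} \<subseteq> {xs. set xs \<subseteq> (\<Union>k\<le>n. S k) \<and> length xs = Suc n}"
  proof
    fix y assume "y \<in> {y. flag y}"
    then have y: "flag y" by simp
    have "set y \<subseteq> (\<Union>k\<le>n. S k)"
    proof
      fix v assume "v \<in> set y"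
      then obtain i where "i < length y" "y ! i = v" by (metis in_set_conv_nth)
      then show "v \<in> (\<Union>k\<le>n. S k)" using flagD(2)[OF y, of i] flagD(1)[OF y] by auto
    qed
    then show "y \<in> {xs. set xs \<subseteq> (\<Union>k\<le>n. S k) \<and> length xs = Suc n}" using flagD(1)[OF y] by simp
  qed
  moreover have "finite {xs. set xs \<subseteq> (\<Union>k\<le>n. S k) \<and> length xs = Suc n}"
    by (rule finite_lists_length_eq) (simp add: finS)
  ultimately show ?thesis by (rule finite_subset)
qed

end


context PO begin

definition okp where
  "okp y j b \<longleftrightarrow> b \<in> bd g d (y ! Suc j) \<and> b \<noteq> y ! j \<and> (j = 0 \<or> y ! (j - 1) \<in> bd g d b)"

definition part where "part y j = (SOME b. okp y j b)"

lemma part_ex: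
  assumes y: "flag y" and j: "j < n"
  shows "\<exists>b. okp y j b"
proof (cases j)
  case 0
  have c: "y ! 1 \<in> S 1" using flagD(2)[OF y, of 1] n1 by simp
  have a: "y ! 0 \<in> bd g d (y ! 1)" using flagD(3)[OF y, of 0] n1 by simp
  show ?thesis using partner0(1)[OF c a] 0 unfolding okp_def by simp
next
  case (Suc i)
  have c: "y ! Suc (Suc i) \<in> S (Suc (Suc i))" using flagD(2)[OF y, of "Suc (Suc i)"] j Suc by simp
  have a: "y ! Suc i \<in> bd g d (y ! Suc (Suc i))" "y ! i \<in> bd g d (y ! Suc i)"
    using flagD(3)[OF y] j Suc by auto
  show ?thesis using partner_ex[OF c a] Suc unfolding okp_def by auto
qed

lemma part_ok: "flag y \<Longrightarrow> j < n \<Longrightarrow> okp y j (part y j)"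
  unfolding part_def using part_ex someI_ex by metis

lemma part_uniq:
  assumes y: "flag y" and j: "j < n" and b1: "okp y j b1" and b2: "okp y j b2"
  shows "b1 = b2"
proof (cases j)
  case 0
  have c: "y ! 1 \<in> S 1" using flagD(2)[OF y, of 1] n1 by simp
  have a: "y ! 0 \<in> bd g d (y ! 1)" using flagD(3)[OF y, of 0] n1 by simp
  show ?thesis using partner0(2)[OF c a] b1 b2 0 unfolding okp_def by simp
next
  case (Suc i)
  have c: "y ! Suc (Suc i) \<in> S (Suc (Suc i))" using flagD(2)[OF y, of "Suc (Suc i)"] j Suc by simp
  have a: "y ! Suc i \<in> bd g d (y ! Suc (Suc i))" "y ! i \<in> bd g d (y ! Suc i)"
    using flagD(3)[OF y] j Suc by auto
  show ?thesis using partner_unique[OF c a] b1 b2 Suc unfolding okp_def by auto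
qed

lemma swap_flag:
  assumes y: "flag y" and j: "j < n" and b: "okp y j b"
  shows "flag (y[j := b])"
proof -
  note F = flagD[OF y]
  have bS: "b \<in> S j" using b bdS[of "y ! Suc j" j b] F(2)[of "Suc j"] j unfolding okp_def by auto
  show ?thesis unfolding flag_def max_flag_def
  proof (intro conjI allI impI)
    show "length (y[j := b]) = Suc n" using F(1) by simp
    show "y[j := b] ! n = the_elem (S n)" using F(1,4) j by simp
    fix i
    show "i \<le> n \<Longrightarrow> y[j := b] ! i \<in> S i" using F(1,2) bS j by (cases "i = j") auto
    assume i: "i < n"
    show "y[j := b] ! i \<in> bd g d (y[j := b] ! Suc i)"
    proof (cases "i = j")
      case True then show ?thesis using b F(1) j unfolding okp_def by auto
    next
      case False
      show ?thesis
      proof (cases "Suc i = j")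
        case True then show ?thesis using b F(1) j False unfolding okp_def by auto
      next
        case False2: False
        then show ?thesis using F(1,3) i False by auto
      qed
    qed
  qed
qed

lemma sgn_Suc: "sgnto g y (Suc k) = (if y ! k = g (y ! Suc k) then 1 else -1) * sgnto g y k"
  by simp

lemma sgn_SS: "sgnto g y (Suc (Suc i)) = (if E (y ! i) (y ! Suc i) (y ! Suc (Suc i)) then 1 else -1) * sgnto g y i"
  unfolding E_def by auto

lemma swap_sign:
  assumes y: "flag y" and j: "j < n" and b: "okp y j b"
  shows "Suc j + m \<le> n \<Longrightarrow> sgnto g (y[j := b]) (Suc j + m) = - sgnto g y (Suc j + m)"
proof (induction m)
  case 0
  note F = flagD[OF y]
  show ?case
  proof (cases j)
    case Z: 0
    have c: "y ! 1 \<in> S 1" using F(2)[of 1] n1 by simp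
    have a: "y ! 0 \<in> bd g d (y ! 1)" using F(3)[of 0] n1 by simp
    have bb: "b \<in> bd g d (y ! 1)" "b \<noteq> y ! 0" using b Z unfolding okp_def by auto
    have "(y ! 0 = g (y ! 1)) \<longleftrightarrow> b \<noteq> g (y ! 1)" using local0[OF c a bb] by blast
    then show ?thesis using Z F(1) j by auto
  next
    case (Suc i)
    have c: "y ! Suc (Suc i) \<in> S (Suc (Suc i))" using F(2)[of "Suc (Suc i)"] j Suc by simp
    have a: "y ! Suc i \<in> bd g d (y ! Suc (Suc i))" "y ! i \<in> bd g d (y ! Suc i)"
      using F(3) j Suc by auto
    have bb: "b \<in> bd g d (y ! Suc (Suc i))" "y ! i \<in> bd g d b" "b \<noteq> y ! Suc i"
      using b Suc unfolding okp_def by auto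
    have e: "E (y ! i) (y ! Suc i) (y ! Suc (Suc i)) \<longleftrightarrow> \<not> E (y ! i) b (y ! Suc (Suc i))"
      using local_prec[OF c a bb] by blast
    have p: "sgnto g (y[Suc i := b]) i = sgnto g y i" by (rule sgnto_prefix) auto
    have "sgnto g (y[Suc i := b]) (Suc (Suc i)) = (if E (y ! i) b (y ! Suc (Suc i)) then 1 else -1) * sgnto g y i"
      using sgn_SS[of "y[Suc i := b]" i] p F(1) j Suc by simp
    then show ?thesis using sgn_SS[of y i] e Suc by auto
  qed
next
  case (Suc m)
  then have IH: "sgnto g (y[j := b]) (Suc j + m) = - sgnto g y (Suc j + m)" by simp
  have "y[j := b] ! (Suc j + m) = y ! (Suc j + m)" "y[j := b] ! Suc (Suc j + m) = y ! Suc (Suc j + m)"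
    by auto
  then show ?case using IH sgn_Suc[of "y[j := b]" "Suc j + m"] sgn_Suc[of y "Suc j + m"] by simp
qed

lemma ll_fin: "finite (ll_set d n y)"
  unfolding ll_set_def by (rule finite_subset[of _ "{..<n - 1}"]) auto

lemma low_sign:
  assumes y: "flag y" and ne: "ll_set d n y \<noteq> {}"
  shows "sgnto g y n = - sgnto g y (Suc (Max (ll_set d n y)))"
proof -
  define l where "l = Max (ll_set d n y)"
  have lin: "l \<in> ll_set d n y" using Max_in[OF ll_fin ne] l_def by simp
  have lmax: "\<And>i. i \<in> ll_set d n y \<Longrightarrow> i \<le> l" using Max_ge[OF ll_fin] l_def by simp
  have l1: "l < n - 1" "y ! Suc l \<in> d (y ! Suc (Suc l))" using lin unfolding ll_set_def by auto
  note F = flagD[OF y]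
  have step: "Suc (Suc l) + m \<le> n \<Longrightarrow> sgnto g y (Suc (Suc l) + m) = - sgnto g y (Suc l)" for m
  proof (induction m)
    case 0
    have "y ! Suc (Suc l) \<in> S (Suc (Suc l))" using F(2) l1 by simp
    then have "y ! Suc l \<noteq> g (y ! Suc (Suc l))" using g_notin_d l1(2) by metis
    then show ?case using sgn_Suc[of y "Suc l"] by simp
  next
    case (Suc m)
    let ?k = "Suc (Suc l) + m"
    have kn: "?k < n" using Suc by simp
    have nl: "Suc l + m \<notin> ll_set d n y" using lmax[of "Suc l + m"] by auto
    have "Suc l + m < n - 1" using kn by simp
    then have "y ! ?k \<notin> d (y ! Suc ?k)" using nl unfolding ll_set_def by simp
    moreover have "y ! ?k \<in> bd g d (y ! Suc ?k)" using F(3) kn by simp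
    ultimately have "y ! ?k = g (y ! Suc ?k)" unfolding bd_def by simp
    then show ?case using Suc sgn_Suc[of y ?k] by simp
  qed
  have "sgnto g y (Suc (Suc l) + (n - Suc (Suc l))) = - sgnto g y (Suc l)" by (rule step) (use l1 in simp)
  moreover have "Suc (Suc l) + (n - Suc (Suc l)) = n" using l1 by simp
  ultimately show ?thesis using l_def by metis
qed

end


context PO begin

definition Lv where "Lv y = (if sgnto g y n = 1 then n - 1 else Max (ll_set d n y))"
definition sig where "sig y = y[Lv y := part y (Lv y)]"
definition Dom where "Dom y \<longleftrightarrow> flag y \<and> (sgnto g y n = 1 \<or> ll_set d n y \<noteq> {})"

lemma Lv_lt: "Dom y \<Longrightarrow> Lv y < n"
proof -
  assume D: "Dom y"
  show "Lv y < n"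
  proof (cases "sgnto g y n = 1")
    case True then show ?thesis using n1 unfolding Lv_def by simp
  next
    case False
    then have ne: "ll_set d n y \<noteq> {}" using D unfolding Dom_def by simp
    have "Max (ll_set d n y) \<in> ll_set d n y" using Max_in[OF ll_fin ne] .
    then show ?thesis using False unfolding Lv_def ll_set_def by auto
  qed
qed

lemma Lv_sign: "Dom y \<Longrightarrow> sgnto g y (Suc (Lv y)) = 1"
proof -
  assume D: "Dom y"
  show ?thesis
  proof (cases "sgnto g y n = 1")
    case True then show ?thesis using n1 unfolding Lv_def by simp
  next
    case False
    then have ne: "ll_set d n y \<noteq> {}" and y: "flag y" using D unfolding Dom_def by simp_all
    have "sgnto g y n = -1" using False sgnto_pm[of g y n] by simp
    then show ?thesis using low_sign[OF y ne] False unfolding Lv_def by simp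
  qed
qed

lemma sig_ok: "Dom y \<Longrightarrow> okp y (Lv y) (part y (Lv y))"
  using part_ok Lv_lt unfolding Dom_def by blast

lemma sig_flag: "Dom y \<Longrightarrow> flag (sig y)"
  unfolding sig_def using swap_flag sig_ok Lv_lt unfolding Dom_def by blast

lemma sig_sign: "Dom y \<Longrightarrow> sgnto g (sig y) n = - sgnto g y n"
proof -
  assume D: "Dom y"
  have y: "flag y" using D unfolding Dom_def by simp
  have "Suc (Lv y) + (n - Suc (Lv y)) = n" using Lv_lt[OF D] by simp
  then show ?thesis using swap_sign[OF y Lv_lt[OF D] sig_ok[OF D], of "n - Suc (Lv y)"] unfolding sig_def
    by simp
qed

lemma sig_lt: "Dom y \<Longrightarrow> flag_lt S g d y (sig y)"
proof -
  assume D: "Dom y"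
  have y: "flag y" using D unfolding Dom_def by simp
  note F = flagD[OF y]
  define j where "j = Lv y"
  define b where "b = part y j"
  have jn: "j < n" using Lv_lt[OF D] j_def by simp
  have ok: "okp y j b" using sig_ok[OF D] j_def b_def by simp
  have s1: "sgnto g y (Suc j) = 1" using Lv_sign[OF D] j_def by simp
  have sy: "sig y = y[j := b]" unfolding sig_def j_def b_def ..
  have fcj: "fc S g d y (y[j := b]) j"
  proof (cases j)
    case 0
    have c: "y ! 1 \<in> S 1" using F(2)[of 1] n1 by simp
    have a: "y ! 0 \<in> bd g d (y ! 1)" using F(3)[of 0] n1 by simp
    have bb: "b \<in> bd g d (y ! 1)" "b \<noteq> y ! 0" using ok 0 unfolding okp_def by auto
    have "y ! 0 = g (y ! 1)" using s1 0 by (auto split: if_splits)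
    then have "(b, y ! 0) \<in> upper_lt S g d 0" using local0[OF c a bb] by blast
    then show ?thesis using 0 F(1) unfolding fc_def by simp
  next
    case (Suc i)
    have c: "y ! Suc (Suc i) \<in> S (Suc (Suc i))" using F(2)[of "Suc (Suc i)"] jn Suc by simp
    have a: "y ! Suc i \<in> bd g d (y ! Suc (Suc i))" "y ! i \<in> bd g d (y ! Suc i)"
      using F(3) jn Suc by auto
    have bb: "b \<in> bd g d (y ! Suc (Suc i))" "y ! i \<in> bd g d b" "b \<noteq> y ! Suc i"
      using ok Suc unfolding okp_def by auto
    note LP = local_prec[OF c a bb]
    have ss: "(if E (y ! i) (y ! Suc i) (y ! Suc (Suc i)) then 1 else -1) * sgnto g y i = 1"
      using s1 sgn_SS[of y i] Suc by simp
    have bj: "y[j := b] ! Suc i = b" using F(1) jn Suc by simp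
    show ?thesis
    proof (cases "E (y ! i) (y ! Suc i) (y ! Suc (Suc i))")
      case True
      then have "sgnto g y i = 1" using ss by simp
      then show ?thesis using LP True bj Suc unfolding fc_def by simp
    next
      case False
      then have "sgnto g y i = -1" using ss by simp
      then show ?thesis using LP False bj Suc unfolding fc_def by simp
    qed
  qed
  have "flag_lt S g d y (y[j := b])"
    using flag_lt_char[of y "y[j := b]" j] fcj F(1) jn ok unfolding okp_def by auto
  then show ?thesis using sy by simp
qed

lemma sig_ll:
  assumes D: "Dom y" and s: "sgnto g y n \<noteq> 1"
  shows "ll_set d n (sig y) \<noteq> {} \<and> Max (ll_set d n (sig y)) = Lv y"
proof -
  have ne: "ll_set d n y \<noteq> {}" using D s unfolding Dom_def by simp
  define l where "l = Max (ll_set d n y)"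
  have lv: "Lv y = l" using s unfolding Lv_def l_def by simp
  have lin: "l \<in> ll_set d n y" using Max_in[OF ll_fin ne] l_def by simp
  have lmax: "\<And>i. i \<in> ll_set d n y \<Longrightarrow> i \<le> l" using Max_ge[OF ll_fin] l_def by simp
  have sy: "sig y = y[l := part y l]" unfolding sig_def lv ..
  have eq: "\<And>i. l \<le> i \<Longrightarrow> i \<in> ll_set d n (sig y) \<longleftrightarrow> i \<in> ll_set d n y"
    unfolding sy ll_set_def by auto
  have l2: "l \<in> ll_set d n (sig y)" using eq[of l] lin by simp
  have l3: "\<And>i. i \<in> ll_set d n (sig y) \<Longrightarrow> i \<le> l"
  proof -
    fix i assume "i \<in> ll_set d n (sig y)"
    then show "i \<le> l" using eq[of i] lmax[of i] by (cases "l \<le> i") auto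
  qed
  have "Max (ll_set d n (sig y)) = l" by (rule Max_eqI[OF ll_fin l3 l2])
  then show ?thesis using l2 lv by auto
qed

lemma sig_inj:
  assumes Dy: "Dom y" and Dz: "Dom z" and e: "sig y = sig z"
  shows "y = z"
proof -
  have y: "flag y" and z: "flag z" using Dy Dz unfolding Dom_def by simp_all
  have ss: "sgnto g y n = sgnto g z n" using sig_sign[OF Dy] sig_sign[OF Dz] e by simp
  have LL: "Lv y = Lv z"
  proof (cases "sgnto g y n = 1")
    case True then show ?thesis using ss unfolding Lv_def by simp
  next
    case False
    then show ?thesis using sig_ll[OF Dy False] sig_ll[OF Dz] ss e by simp
  qed
  define j where "j = Lv y"
  define w where "w = sig y"
  have jn: "j < n" using Lv_lt[OF Dy] j_def by simp
  have wf: "flag w" using sig_flag[OF Dy] w_def by simp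
  have len: "length y = Suc n" "length z = Suc n" using flagD(1) y z by auto
  have wy: "w = y[j := part y j]" unfolding w_def sig_def j_def ..
  have wz: "w = z[j := part z j]" using e LL unfolding w_def sig_def j_def by simp
  have oky: "okp y j (part y j)" using sig_ok[OF Dy] j_def by simp
  have okz: "okp z j (part z j)" using sig_ok[OF Dz] j_def LL by simp
  have yw: "y = w[j := y ! j]" using wy by simp
  have zw: "z = w[j := z ! j]" using wz by simp
  have wj1: "w ! j = part y j" using wy len jn by simp
  have wj2: "w ! j = part z j" using wz len jn by simp
  note wj = wj1 wj2
  have o1: "okp w j (y ! j)"
  proof -
    have "y ! j \<in> bd g d (y ! Suc j)" using flagD(3)[OF y] jn by simp
    moreover have "y ! Suc j = w ! Suc j" using wy by simp
    moreover have "j > 0 \<Longrightarrow> y ! (j - 1) \<in> bd g d (y ! j)" using flagD(3)[OF y, of "j - 1"] jn by simp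
    moreover have "j > 0 \<Longrightarrow> y ! (j - 1) = w ! (j - 1)" using wy by (cases j) auto
    moreover have "y ! j \<noteq> w ! j" using oky wj(1) unfolding okp_def by metis
    ultimately show ?thesis unfolding okp_def by auto
  qed
  have o2: "okp w j (z ! j)"
  proof -
    have "z ! j \<in> bd g d (z ! Suc j)" using flagD(3)[OF z] jn by simp
    moreover have "z ! Suc j = w ! Suc j" using wz by simp
    moreover have "j > 0 \<Longrightarrow> z ! (j - 1) \<in> bd g d (z ! j)" using flagD(3)[OF z, of "j - 1"] jn by simp
    moreover have "j > 0 \<Longrightarrow> z ! (j - 1) = w ! (j - 1)" using wz by (cases j) auto
    moreover have "z ! j \<noteq> w ! j" using okz wj(2) unfolding okp_def by metis
    ultimately show ?thesis unfolding okp_def by auto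
  qed
  have "y ! j = z ! j" using part_uniq[OF wf jn o1 o2] .
  then show ?thesis using yw zw by simp
qed

lemma nonDom_g:
  assumes y: "flag y" and nd: "\<not> Dom y" and i: "1 \<le> i" "i < n"
  shows "y ! i = g (y ! Suc i)"
proof -
  have "ll_set d n y = {}" using nd y unfolding Dom_def by simp
  then have "i - 1 \<notin> ll_set d n y" by simp
  then have "y ! i \<notin> d (y ! Suc i)" using i unfolding ll_set_def by simp
  moreover have "y ! i \<in> bd g d (y ! Suc i)" using flagD(3)[OF y] i by simp
  ultimately show ?thesis unfolding bd_def by simp
qed

lemma nonDom_sgn:
  assumes y: "flag y" and nd: "\<not> Dom y"
  shows "1 + m \<le> n \<Longrightarrow> sgnto g y (1 + m) = sgnto g y 1"
proof (induction m)
  case 0 then show ?case by simp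
next
  case (Suc m)
  have "y ! (1 + m) = g (y ! Suc (1 + m))" using nonDom_g[OF y nd, of "1 + m"] Suc by simp
  then show ?case using Suc sgn_Suc[of y "1 + m"] by simp
qed

lemma nonDom_unique:
  assumes y: "flag y" and z: "flag z" and ny: "\<not> Dom y" and nz: "\<not> Dom z"
  shows "y = z"
proof -
  have len: "length y = Suc n" "length z = Suc n" using flagD(1) y z by auto
  have top: "\<And>t. t < n \<Longrightarrow> y ! (n - t) = z ! (n - t)"
  proof -
    fix t show "t < n \<Longrightarrow> y ! (n - t) = z ! (n - t)"
    proof (induction t)
      case 0 then show ?case using flagD(4) y z by simp
    next
      case (Suc t)
      have "y ! (n - Suc t) = g (y ! Suc (n - Suc t))" using nonDom_g[OF y ny, of "n - Suc t"] Suc by simp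
      moreover have "z ! (n - Suc t) = g (z ! Suc (n - Suc t))" using nonDom_g[OF z nz, of "n - Suc t"] Suc by simp
      moreover have "Suc (n - Suc t) = n - t" using Suc by simp
      ultimately show ?case using Suc by simp
    qed
  qed
  have hi: "\<And>i. 1 \<le> i \<Longrightarrow> i \<le> n \<Longrightarrow> y ! i = z ! i"
  proof -
    fix i assume "1 \<le> i" "i \<le> n"
    then show "y ! i = z ! i" using top[of "n - i"] by simp
  qed
  have s1: "sgnto g y 1 \<noteq> 1" "sgnto g z 1 \<noteq> 1"
    using nonDom_sgn[OF y ny, of "n - 1"] nonDom_sgn[OF z nz, of "n - 1"] ny nz y z n1
    unfolding Dom_def by auto
  have "y ! 0 \<noteq> g (y ! 1)" "z ! 0 \<noteq> g (z ! 1)" using s1 by auto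
  moreover have "y ! 0 \<in> bd g d (y ! 1)" "z ! 0 \<in> bd g d (z ! 1)" using flagD(3) y z n1 by auto
  moreover obtain v where "d (y ! 1) = {v}" using d1 flagD(2)[OF y, of 1] n1 by auto
  moreover have "y ! 1 = z ! 1" using hi n1 by simp
  ultimately have "y ! 0 = z ! 0" unfolding bd_def by auto
  then show ?thesis using hi len
    by (intro nth_equalityI) (auto, metis One_nat_def less_Suc_eq_0_disj less_Suc_eq_le not_less_eq_eq)
qed

end



lemma max_ex:
  fixes R :: "'b \<Rightarrow> 'b \<Rightarrow> bool"
  assumes "finite A" "A \<noteq> {}" and irr: "\<And>x. x \<in> A \<Longrightarrow> \<not> R x x"
    and tr: "\<And>x y z. x \<in> A \<Longrightarrow> y \<in> A \<Longrightarrow> z \<in> A \<Longrightarrow> R x y \<Longrightarrow> R y z \<Longrightarrow> R x z"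
  shows "\<exists>M\<in>A. \<forall>y\<in>A. \<not> R M y"
  using assms(1,2,3,4)
proof (induction A rule: finite_ne_induct)
  case (singleton x) then show ?case by blast
next
  case (insert x F)
  then obtain M where M: "M \<in> F" "\<forall>y\<in>F. \<not> R M y" by blast
  show ?case
  proof (cases "R M x")
    case True
    have "\<forall>y\<in>insert x F. \<not> R x y"
    proof
      fix y assume y: "y \<in> insert x F"
      show "\<not> R x y"
      proof
        assume "R x y"
        then show False
        proof (cases "y = x")
          case True then show False using insert.prems(1) \<open>R x y\<close> by blast
        next
          case False
          then have "y \<in> F" using y by blast
          then have "R M y" using insert.prems(2)[of M x y] M True \<open>R x y\<close> by blast
          then show False using M \<open>y \<in> F\<close> by blast
        qed
      qed
    qed
    then show ?thesis by blast
  next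
    case False
    then show ?thesis using M by blast
  qed
qed

lemma flag_inter_eq:
  assumes "length x = length y" "j < length x" "\<And>i. i \<noteq> j \<Longrightarrow> i < length x \<Longrightarrow> x ! i = y ! i" "x ! j \<noteq> y ! j"
  shows "flag_inter x y = punct x j" "flag_inter x y = punct y j"
  using assms unfolding flag_inter_def punct_def
  by (auto intro!: nth_equalityI simp: nth_list_update)

context PO begin

lemma x_Dom:
  assumes x: "flag x" and x': "flag x'" and lt: "flag_lt S g d x x'"
  shows "Dom x"
proof (rule ccontr)
  assume nd: "\<not> Dom x"
  define T where "T = {y. flag y \<and> flag_lt S g d x y}"
  have fT: "finite T" using fin_flags unfolding T_def by (rule finite_subset[rotated]) auto
  have neT: "T \<noteq> {}" using x' lt unfolding T_def by blast
  obtain M where M: "M \<in> T" "\<forall>y\<in>T. \<not> flag_lt S g d M y"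
    using max_ex[OF fT neT, of "flag_lt S g d"] lt_irr lt_trans unfolding T_def by blast
  have Mf: "flag M" "flag_lt S g d x M" using M unfolding T_def by auto
  have "M \<noteq> x" using Mf lt_irr by blast
  then have DM: "Dom M" using nonDom_unique[OF Mf(1) x _ nd] by blast
  have "sig M \<in> T" using sig_flag[OF DM] lt_trans[OF x Mf(1) sig_flag[OF DM] Mf(2) sig_lt[OF DM]]
    unfolding T_def by blast
  then show False using M sig_lt[OF DM] by blast
qed

lemma succ_sig:
  assumes x: "flag x" and x': "flag x'" and lt: "flag_lt S g d x x'"
    and imm: "\<not> (\<exists>z. flag z \<and> flag_lt S g d x z \<and> flag_lt S g d z x')"
  shows "x' = sig x"
proof (rule ccontr)
  assume ne: "x' \<noteq> sig x"
  have Dx: "Dom x" by (rule x_Dom[OF x x' lt])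
  have sf: "flag (sig x)" using sig_flag[OF Dx] .
  have "flag_lt S g d x' (sig x) \<or> flag_lt S g d (sig x) x'" using lt_total[OF x' sf ne] .
  then have lt2: "flag_lt S g d x' (sig x)" using imm sf sig_lt[OF Dx] by blast
  define T where "T = {y. flag y \<and> (y = x' \<or> flag_lt S g d x' y)}"
  define A where "A = {y \<in> T. Dom y} \<union> {x}"
  have fT: "finite T" using fin_flags unfolding T_def by (rule finite_subset[rotated]) auto
  have xT: "x \<notin> T" using lt lt_asym[OF x x'] lt_irr unfolding T_def by blast
  have x'T: "x' \<in> T" using x' unfolding T_def by blast
  have AD: "\<And>y. y \<in> A \<Longrightarrow> Dom y" using Dx unfolding A_def by blast
  have inj: "inj_on sig A" using sig_inj AD unfolding inj_on_def by blast
  have img: "sig ` A \<subseteq> T - {x'}"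
  proof
    fix w assume "w \<in> sig ` A"
    then obtain y where y: "y \<in> A" "w = sig y" by blast
    show "w \<in> T - {x'}"
    proof (cases "y = x")
      case True
      then show ?thesis using y lt2 sf lt_irr unfolding T_def by auto
    next
      case False
      then have yT: "y \<in> T" "Dom y" using y unfolding A_def by auto
      have yf: "flag y" using yT(2) unfolding Dom_def by simp
      have l1: "flag_lt S g d y (sig y)" using sig_lt[OF yT(2)] .
      have "flag_lt S g d x' (sig y)"
      proof (cases "y = x'")
        case True then show ?thesis using l1 by simp
      next
        case False
        then have "flag_lt S g d x' y" using yT unfolding T_def by blast
        then show ?thesis using lt_trans[OF x' yf sig_flag[OF yT(2)] _ l1] by blast
      qed
      then show ?thesis using y sig_flag[OF yT(2)] lt_irr unfolding T_def by auto
    qed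
  qed
  have fA: "finite A" using fT unfolding A_def by auto
  have c1: "card A \<le> card (T - {x'})"
    using card_inj_on_le[OF inj img] fT by blast
  have c2: "card (T - {x'}) = card T - 1" using x'T fT by simp
  have c3: "card A = card {y \<in> T. Dom y} + 1" unfolding A_def using xT fT by simp
  have c4: "card {y \<in> T. \<not> Dom y} \<le> 1"
  proof -
    have fin: "finite {y \<in> T. \<not> Dom y}" using fT by simp
    have all: "\<forall>a\<in>{y \<in> T. \<not> Dom y}. \<forall>b\<in>{y \<in> T. \<not> Dom y}. a = b"
    proof (intro ballI)
      fix a b assume "a \<in> {y \<in> T. \<not> Dom y}" "b \<in> {y \<in> T. \<not> Dom y}"
      then have "flag a" "flag b" "\<not> Dom a" "\<not> Dom b" unfolding T_def by auto
      then show "a = b" by (rule nonDom_unique)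
    qed
    show ?thesis using card_le_Suc0_iff_eq[OF fin] all by simp
  qed
  have c5: "card T = card {y \<in> T. Dom y} + card {y \<in> T. \<not> Dom y}"
  proof -
    have "T = {y \<in> T. Dom y} \<union> {y \<in> T. \<not> Dom y}" by blast
    moreover have "{y \<in> T. Dom y} \<inter> {y \<in> T. \<not> Dom y} = {}" by blast
    ultimately show ?thesis using fT card_Un_disjoint[of "{y \<in> T. Dom y}" "{y \<in> T. \<not> Dom y}"] by simp
  qed
  have "card T \<ge> 1" using x'T fT card_0_eq by fastforce
  then show False using c1 c2 c3 c4 c5 by linarith
qed

end

theorem mainTheorem11:
  fixes S :: "nat \<Rightarrow> 'a set" and g :: "'a \<Rightarrow> 'a" and d :: "'a \<Rightarrow> 'a set"
    and n :: nat and x x' :: "'a list"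
  assumes "pos_opetope S g d"
    and "has_dim S n"
    and "max_flag S g d n x"
    and "max_flag S g d n x'"
    and "flag_lt S g d x x'"
    and "\<not> (\<exists>z. max_flag S g d n z \<and> flag_lt S g d x z \<and> flag_lt S g d z x')"
  shows "pflag S g d n (flag_inter x x') \<and>
         (flag_sgn g n x = 1 \<longrightarrow> high_pflag S g d n (flag_inter x x')) \<and>
         (flag_sgn g n x = -1 \<longrightarrow> low_pflag S g d n (flag_inter x x'))"
proof -
  have n1: "1 \<le> n"
  proof (rule ccontr)
    assume "\<not> 1 \<le> n"
    then have "n = 0" by simp
    then have "x = x'" using assms(3,4) unfolding max_flag_def
      by (intro nth_equalityI) auto
    then show False using assms(5) unfolding flag_lt_def by simp
  qed
  interpret P: PO S g d n using assms(1,2) n1 by unfold_locales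
  have x: "P.flag x" and x': "P.flag x'" using assms(3,4) unfolding P.flag_def by simp_all
  have imm: "\<not> (\<exists>z. P.flag z \<and> flag_lt S g d x z \<and> flag_lt S g d z x')"
    using assms(6) unfolding P.flag_def .
  have e: "x' = P.sig x" using P.succ_sig[OF x x' assms(5) imm] .
  have Dx: "P.Dom x" using P.x_Dom[OF x x' assms(5)] .
  define j where "j = P.Lv x"
  have jn: "j < n" using P.Lv_lt[OF Dx] j_def by simp
  have ok: "P.okp x j (P.part x j)" using P.sig_ok[OF Dx] j_def by simp
  have sx: "P.sig x = x[j := P.part x j]" unfolding P.sig_def j_def ..
  have len: "length x = Suc n" using P.flagD(1)[OF x] .
  have FI: "flag_inter x x' = punct x j" "flag_inter x x' = punct x' j"
    using flag_inter_eq[of x x' j] e sx len jn ok unfolding P.okp_def by auto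
  have high: "flag_sgn g n x = 1 \<Longrightarrow> high_pflag S g d n (flag_inter x x')"
  proof -
    assume "flag_sgn g n x = 1"
    then have "j = n - 1" unfolding j_def P.Lv_def flag_sgn_def by simp
    then show ?thesis unfolding high_pflag_def using FI assms(3) by blast
  qed
  have low: "flag_sgn g n x = -1 \<Longrightarrow> low_pflag S g d n (flag_inter x x')"
  proof -
    assume s: "flag_sgn g n x = -1"
    then have s': "sgnto g x n \<noteq> 1" unfolding flag_sgn_def by simp
    have ll: "ll_set d n x' \<noteq> {}" "Max (ll_set d n x') = j"
      using P.sig_ll[OF Dx s'] e j_def by auto
    have "sgnto g x' n = 1" using P.sig_sign[OF Dx] e s unfolding flag_sgn_def by simp
    then have Dx': "P.Dom x'" using x' unfolding P.Dom_def by simp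
    have "\<exists>z. max_flag S g d n z \<and> flag_lt S g d x' z"
      using P.sig_flag[OF Dx'] P.sig_lt[OF Dx'] unfolding P.flag_def by blast
    then show ?thesis unfolding low_pflag_def using assms(4,3,5) ll FI by metis
  qed
  have "flag_sgn g n x = 1 \<or> flag_sgn g n x = -1" unfolding flag_sgn_def using sgnto_pm .
  then show ?thesis using high low unfolding pflag_def by blast
qed

end
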